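(* Let Q be a strong quasi-MV* algebra. Then there exist an MV*-algebra B and a flat strong quasi-MV* algebra F such that Q can be embedded into the direct product B × F. Such an embedding is an isomorphism if Q is an MV*-algebra or Q is a flat strong quasi-MV* algebra.
   Context: An MV*-algebra is an algebra ⟨B; ⊕, −, 0, 1⟩ of type ⟨2,1,0,0⟩ satisfying: x⊕y = y⊕x; (1⊕x)⊕(y⊕(1⊕z)) = ((1⊕x)⊕y)⊕(1⊕z); x⊕(−x) = 0; (x⊕1)⊕1 = 1; x⊕0 = x; −(x⊕y) = (−x)⊕(−y); −(−x) = x; x⊕y = (x⁺⊕y⁺)⊕(x⁻⊕y⁻); (−x⊕(x⊕y))⁺ = −(x⁺)⊕(x⁺⊕y⁺); x∨y = y∨x; x∨(y∨z) = (x∨y)∨z; x⊕(y∨z) = (x⊕y)∨(x⊕z); where x⁺ = 1⊕(−1⊕x), x⁻ = −1⊕(1⊕x), and x∨y = (x⁺⊕(−x⁺⊕y⁺)⁺)⊕(x⁻⊕(−x⁻⊕y⁻)⁺). A quasi-MV* algebra is an algebra ⟨A; ⊕, −, ⁺, ⁻, 0, 1⟩ of type ⟨2,1,1,1,0,0⟩ satisfying: x⊕y = y⊕x; (1⊕x)⊕(y⊕(1⊕z)) = ((1⊕x)⊕y)⊕(1⊕z); (x⊕1)⊕1 = 1; (x⊕y)⊕0 = x⊕y; x⁺⊕0 = (x⊕0)⁺ = 1⊕(−1⊕x) and x⁻⊕0 = (x⊕0)⁻ = −1⊕(1⊕x); x⊕y = (x⁺⊕y⁺)⊕(x⁻⊕y⁻);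 0 = −0; x⊕(−x) = 0; −(x⊕y) = (−x)⊕(−y); −(−x) = x; (−x⊕(x⊕y))⁺ = −x⁺⊕(x⁺⊕y⁺); x∨y = y∨x; x∨(y∨z) = (x∨y)∨z; x⊕(y∨z) = (x⊕y)∨(x⊕z); with x∨y = (x⁺⊕(−x⁺⊕y⁺)⁺)⊕(x⁻⊕(−x⁻⊕y⁻)⁺). A strong quasi-MV* algebra is a quasi-MV* algebra satisfying x⁺ = x⁺⊕0 and x⁻ = x⁻⊕0 for all x. It is flat if it satisfies 0 = 1. Direct products carry coordinatewise operations; an embedding is an injective map preserving 0, 1, ⊕ and − (hence also ⁺ and ⁻). *)

theory Defs
  imports Main
begin

text \<open>For MV*-algebras only the
fields qcarrier, add, neg, zero, one are used; the fields pos/negp are ignored and the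
operations x-plus, x-minus are the term operations of the MV*-algebra.\<close>

record 'a qmv =
  qcarrier :: "'a set"
  add :: "'a \<Rightarrow> 'a \<Rightarrow> 'a"
  neg :: "'a \<Rightarrow> 'a"
  pos :: "'a \<Rightarrow> 'a"
  negp :: "'a \<Rightarrow> 'a"
  zero :: 'a
  one :: 'a

definition tpos :: "('a, 'b) qmv_scheme \<Rightarrow> 'a \<Rightarrow> 'a" where
  "tpos A x = add A (one A) (add A (neg A (one A)) x)"

definition tneg :: "('a, 'b) qmv_scheme \<Rightarrow> 'a \<Rightarrow> 'a" where
  "tneg A x = add A (neg A (one A)) (add A (one A) x)"

definition join_with :: "('a, 'b) qmv_scheme \<Rightarrow> ('a \<Rightarrow> 'a) \<Rightarrow> ('a \<Rightarrow> 'a) \<Rightarrow> 'a \<Rightarrow> 'a \<Rightarrow> 'a" where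
  "join_with A p m x y =
     add A (add A (p x) (p (add A (neg A (p x)) (p y))))
           (add A (m x) (p (add A (neg A (m x)) (m y))))"

definition mv_star_algebra :: "('a, 'b) qmv_scheme \<Rightarrow> bool" where
  "mv_star_algebra A \<longleftrightarrow>
    (let C = qcarrier A; s = add A; n = neg A; z = zero A; u = one A;
         P = tpos A; M = tneg A; J = join_with A (tpos A) (tneg A) in
     z \<in> C \<and> u \<in> C \<and> (\<forall>x\<in>C. \<forall>y\<in>C. s x y \<in> C) \<and> (\<forall>x\<in>C. n x \<in> C) \<and>
     (\<forall>x\<in>C. \<forall>y\<in>C. s x y = s y x) \<and>
     (\<forall>x\<in>C. \<forall>y\<in>C. \<forall>w\<in>C. s (s u x) (s y (s u w)) = s (s (s u x) y) (s u w)) \<and>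
     (\<forall>x\<in>C. s x (n x) = z) \<and>
     (\<forall>x\<in>C. s (s x u) u = u) \<and>
     (\<forall>x\<in>C. s x z = x) \<and>
     (\<forall>x\<in>C. \<forall>y\<in>C. n (s x y) = s (n x) (n y)) \<and>
     (\<forall>x\<in>C. n (n x) = x) \<and>
     (\<forall>x\<in>C. \<forall>y\<in>C. s x y = s (s (P x) (P y)) (s (M x) (M y))) \<and>
     (\<forall>x\<in>C. \<forall>y\<in>C. P (s (n x) (s x y)) = s (n (P x)) (s (P x) (P y))) \<and>
     (\<forall>x\<in>C. \<forall>y\<in>C. J x y = J y x) \<and>
     (\<forall>x\<in>C. \<forall>y\<in>C. \<forall>w\<in>C. J x (J y w) = J (J x y) w) \<and>
     (\<forall>x\<in>C. \<forall>y\<in>C. \<forall>w\<in>C. s x (J y w) = J (s x y) (s x w)))"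

definition quasi_mv_star_algebra :: "('a, 'b) qmv_scheme \<Rightarrow> bool" where
  "quasi_mv_star_algebra A \<longleftrightarrow>
    (let C = qcarrier A; s = add A; n = neg A; z = zero A; u = one A;
         P = pos A; M = negp A; J = join_with A (pos A) (negp A) in
     z \<in> C \<and> u \<in> C \<and> (\<forall>x\<in>C. \<forall>y\<in>C. s x y \<in> C) \<and> (\<forall>x\<in>C. n x \<in> C) \<and>
     (\<forall>x\<in>C. P x \<in> C) \<and> (\<forall>x\<in>C. M x \<in> C) \<and>
     (\<forall>x\<in>C. \<forall>y\<in>C. s x y = s y x) \<and>
     (\<forall>x\<in>C. \<forall>y\<in>C. \<forall>w\<in>C. s (s u x) (s y (s u w)) = s (s (s u x) y) (s u w)) \<and>
     (\<forall>x\<in>C. s (s x u) u = u) \<and>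
     (\<forall>x\<in>C. \<forall>y\<in>C. s (s x y) z = s x y) \<and>
     (\<forall>x\<in>C. s (P x) z = P (s x z) \<and> P (s x z) = s u (s (n u) x)) \<and>
     (\<forall>x\<in>C. s (M x) z = M (s x z) \<and> M (s x z) = s (n u) (s u x)) \<and>
     (\<forall>x\<in>C. \<forall>y\<in>C. s x y = s (s (P x) (P y)) (s (M x) (M y))) \<and>
     z = n z \<and>
     (\<forall>x\<in>C. s x (n x) = z) \<and>
     (\<forall>x\<in>C. \<forall>y\<in>C. n (s x y) = s (n x) (n y)) \<and>
     (\<forall>x\<in>C. n (n x) = x) \<and>
     (\<forall>x\<in>C. \<forall>y\<in>C. P (s (n x) (s x y)) = s (n (P x)) (s (P x) (P y))) \<and>
     (\<forall>x\<in>C. \<forall>y\<in>C. J x y = J y x) \<and>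
     (\<forall>x\<in>C. \<forall>y\<in>C. \<forall>w\<in>C. J x (J y w) = J (J x y) w) \<and>
     (\<forall>x\<in>C. \<forall>y\<in>C. \<forall>w\<in>C. s x (J y w) = J (s x y) (s x w)))"

definition strong_qmv :: "('a, 'b) qmv_scheme \<Rightarrow> bool" where
  "strong_qmv A \<longleftrightarrow> quasi_mv_star_algebra A \<and>
     (\<forall>x\<in>qcarrier A. pos A x = add A (pos A x) (zero A) \<and>
                      negp A x = add A (negp A x) (zero A))"

definition flat_strong_qmv :: "('a, 'b) qmv_scheme \<Rightarrow> bool" where
  "flat_strong_qmv A \<longleftrightarrow> strong_qmv A \<and> zero A = one A"

definition prod_alg :: "('b, 'x) qmv_scheme \<Rightarrow> ('c, 'y) qmv_scheme \<Rightarrow> ('b \<times> 'c) qmv" where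
  "prod_alg B F =
    \<lparr> qcarrier = qcarrier B \<times> qcarrier F,
      add = (\<lambda>(a, b) (c, d). (add B a c, add F b d)),
      neg = (\<lambda>(a, b). (neg B a, neg F b)),
      pos = (\<lambda>(a, b). (tpos B a, pos F b)),
      negp = (\<lambda>(a, b). (tneg B a, negp F b)),
      zero = (zero B, zero F),
      one = (one B, one F) \<rparr>"

definition embedding :: "('a, 'x) qmv_scheme \<Rightarrow> ('c, 'y) qmv_scheme \<Rightarrow> ('a \<Rightarrow> 'c) \<Rightarrow> bool" where
  "embedding A D f \<longleftrightarrow>
     inj_on f (qcarrier A) \<and> f ` qcarrier A \<subseteq> qcarrier D \<and>
     f (zero A) = zero D \<and> f (one A) = one D \<and>
     (\<forall>x\<in>qcarrier A. \<forall>y\<in>qcarrier A. f (add A x y) = add D (f x) (f y)) \<and>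
     (\<forall>x\<in>qcarrier A. f (neg A x) = neg D (f x))"

end

theory Submission
  imports Defs
begin

locale sq =
  fixes Q :: "'a qmv"
  assumes sQ: "strong_qmv Q"
begin

abbreviation "C \<equiv> qcarrier Q"
abbreviation "s \<equiv> add Q"
abbreviation "n \<equiv> neg Q"
abbreviation "z \<equiv> zero Q"
abbreviation "u \<equiv> one Q"

lemma ax: "quasi_mv_star_algebra Q"
  using sQ by (simp add: strong_qmv_def)

lemmas AX = ax[unfolded quasi_mv_star_algebra_def Let_def]
lemmas zC = AX[THEN conjunct1, rule_format]
lemmas uC = AX[THEN conjunct2, THEN conjunct1, rule_format]
lemmas sC = AX[THEN conjunct2, THEN conjunct2, THEN conjunct1, rule_format]
lemmas nC = AX[THEN conjunct2, THEN conjunct2, THEN conjunct2, THEN conjunct1, rule_format]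
lemmas pC = AX[THEN conjunct2, THEN conjunct2, THEN conjunct2, THEN conjunct2, THEN conjunct1, rule_format]
lemmas mC = AX[THEN conjunct2, THEN conjunct2, THEN conjunct2, THEN conjunct2, THEN conjunct2, THEN conjunct1, rule_format]
lemmas comm = AX[THEN conjunct2, THEN conjunct2, THEN conjunct2, THEN conjunct2, THEN conjunct2, THEN conjunct2, THEN conjunct1, rule_format]
lemmas assoc = AX[THEN conjunct2, THEN conjunct2, THEN conjunct2, THEN conjunct2, THEN conjunct2, THEN conjunct2, THEN conjunct2, THEN conjunct1, rule_format]
lemmas uu = AX[THEN conjunct2, THEN conjunct2, THEN conjunct2, THEN conjunct2, THEN conjunct2, THEN conjunct2, THEN conjunct2, THEN conjunct2, THEN conjunct1, rule_format]
lemmas sreg = AX[THEN conjunct2, THEN conjunct2, THEN conjunct2, THEN conjunct2, THEN conjunct2, THEN conjunct2, THEN conjunct2, THEN conjunct2, THEN conjunct2, THEN conjunct1, rule_format]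
lemmas PP = AX[THEN conjunct2, THEN conjunct2, THEN conjunct2, THEN conjunct2, THEN conjunct2, THEN conjunct2, THEN conjunct2, THEN conjunct2, THEN conjunct2, THEN conjunct2, THEN conjunct1, rule_format]
lemmas MM = AX[THEN conjunct2, THEN conjunct2, THEN conjunct2, THEN conjunct2, THEN conjunct2, THEN conjunct2, THEN conjunct2, THEN conjunct2, THEN conjunct2, THEN conjunct2, THEN conjunct2, THEN conjunct1, rule_format]
lemmas dec = AX[THEN conjunct2, THEN conjunct2, THEN conjunct2, THEN conjunct2, THEN conjunct2, THEN conjunct2, THEN conjunct2, THEN conjunct2, THEN conjunct2, THEN conjunct2, THEN conjunct2, THEN conjunct2, THEN conjunct1, rule_format]
lemmas nz0 = AX[THEN conjunct2, THEN conjunct2, THEN conjunct2, THEN conjunct2, THEN conjunct2, THEN conjunct2, THEN conjunct2, THEN conjunct2, THEN conjunct2, THEN conjunct2, THEN conjunct2, THEN conjunct2, THEN conjunct2, THEN conjunct1, rule_format]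
lemmas inv = AX[THEN conjunct2, THEN conjunct2, THEN conjunct2, THEN conjunct2, THEN conjunct2, THEN conjunct2, THEN conjunct2, THEN conjunct2, THEN conjunct2, THEN conjunct2, THEN conjunct2, THEN conjunct2, THEN conjunct2, THEN conjunct2, THEN conjunct1, rule_format]
lemmas ndist = AX[THEN conjunct2, THEN conjunct2, THEN conjunct2, THEN conjunct2, THEN conjunct2, THEN conjunct2, THEN conjunct2, THEN conjunct2, THEN conjunct2, THEN conjunct2, THEN conjunct2, THEN conjunct2, THEN conjunct2, THEN conjunct2, THEN conjunct2, THEN conjunct1, rule_format]
lemmas nn = AX[THEN conjunct2, THEN conjunct2, THEN conjunct2, THEN conjunct2, THEN conjunct2, THEN conjunct2, THEN conjunct2, THEN conjunct2, THEN conjunct2, THEN conjunct2, THEN conjunct2, THEN conjunct2, THEN conjunct2, THEN conjunct2, THEN conjunct2, THEN conjunct2, THEN conjunct1, rule_format]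
lemmas pax = AX[THEN conjunct2, THEN conjunct2, THEN conjunct2, THEN conjunct2, THEN conjunct2, THEN conjunct2, THEN conjunct2, THEN conjunct2, THEN conjunct2, THEN conjunct2, THEN conjunct2, THEN conjunct2, THEN conjunct2, THEN conjunct2, THEN conjunct2, THEN conjunct2, THEN conjunct2, THEN conjunct1, rule_format]
lemmas J1 = AX[THEN conjunct2, THEN conjunct2, THEN conjunct2, THEN conjunct2, THEN conjunct2, THEN conjunct2, THEN conjunct2, THEN conjunct2, THEN conjunct2, THEN conjunct2, THEN conjunct2, THEN conjunct2, THEN conjunct2, THEN conjunct2, THEN conjunct2, THEN conjunct2, THEN conjunct2, THEN conjunct2, THEN conjunct1, rule_format]
lemmas J2 = AX[THEN conjunct2, THEN conjunct2, THEN conjunct2, THEN conjunct2, THEN conjunct2, THEN conjunct2, THEN conjunct2, THEN conjunct2, THEN conjunct2, THEN conjunct2, THEN conjunct2, THEN conjunct2, THEN conjunct2, THEN conjunct2, THEN conjunct2, THEN conjunct2, THEN conjunct2, THEN conjunct2, THEN conjunct2, THEN conjunct1, rule_format]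
lemmas J3 = AX[THEN conjunct2, THEN conjunct2, THEN conjunct2, THEN conjunct2, THEN conjunct2, THEN conjunct2, THEN conjunct2, THEN conjunct2, THEN conjunct2, THEN conjunct2, THEN conjunct2, THEN conjunct2, THEN conjunct2, THEN conjunct2, THEN conjunct2, THEN conjunct2, THEN conjunct2, THEN conjunct2, THEN conjunct2, THEN conjunct2, rule_format]
lemma P1: "x \<in> C \<Longrightarrow> s (pos Q x) z = pos Q (s x z)" using PP by blast
lemma P2: "x \<in> C \<Longrightarrow> pos Q (s x z) = s u (s (n u) x)" using PP by blast
lemma M1: "x \<in> C \<Longrightarrow> s (negp Q x) z = negp Q (s x z)" using MM by blast
lemma M2: "x \<in> C \<Longrightarrow> negp Q (s x z) = s (n u) (s u x)" using MM by blast
lemma nz: "n z = z" using nz0 by simp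

lemma pstr: "x \<in> C \<Longrightarrow> pos Q x = s (pos Q x) z" and mstr: "x \<in> C \<Longrightarrow> negp Q x = s (negp Q x) z"
  using sQ by (auto simp: strong_qmv_def)

lemma pos_t: "x \<in> C \<Longrightarrow> pos Q x = tpos Q x"
  using pstr P1 P2 by (simp add: tpos_def)
lemma neg_t: "x \<in> C \<Longrightarrow> negp Q x = tneg Q x"
  using mstr M1 M2 by (simp add: tneg_def)

lemma tC: "x \<in> C \<Longrightarrow> tpos Q x \<in> C" using pos_t pC by metis
lemma tnC: "x \<in> C \<Longrightarrow> tneg Q x \<in> C" using neg_t mC by metis

lemma J_t: "x \<in> C \<Longrightarrow> y \<in> C \<Longrightarrow> join_with Q (pos Q) (negp Q) x y = join_with Q (tpos Q) (tneg Q) x y"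
  by (simp add: join_with_def pos_t neg_t tC tnC nC sC)

lemma zz: "s z z = z"
  using inv[OF zC] nz by simp

lemma ureg: "s u z = u"
proof -
  have "u = s (s z u) u" using uu[OF zC] by simp
  then have "s u z = s (s (s z u) u) z" by simp
  also have "\<dots> = s (s z u) u" using sreg sC zC uC by simp
  finally show ?thesis using uu[OF zC] by simp
qed

lemma nreg: "x \<in> C \<Longrightarrow> s (n x) z = n (s x z)"
  using ndist[OF _ zC] nz by simp

lemma addreg: "x \<in> C \<Longrightarrow> y \<in> C \<Longrightarrow> s (s x z) (s y z) = s x y"
proof -
  assume x: "x \<in> C" and y: "y \<in> C"
  have px: "pos Q (s x z) = pos Q x" using P1 pstr x by simp
  have py: "pos Q (s y z) = pos Q y" using P1 pstr y by simp
  have mx: "negp Q (s x z) = negp Q x" using M1 mstr x by simp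
  have my: "negp Q (s y z) = negp Q y" using M1 mstr y by simp
  show ?thesis using dec[OF sC[OF x zC] sC[OF y zC]] dec[OF x y] px py mx my by simp
qed

definition "Reg = {x \<in> C. s x z = x}"

definition "g x = (if s x z = x then {} else {x})"

definition BB :: "'a set qmv" where
  "BB = \<lparr> qcarrier = (\<lambda>x. {x}) ` Reg,
          add = (\<lambda>S T. {s (the_elem S) (the_elem T)}),
          neg = (\<lambda>S. {n (the_elem S)}),
          pos = (\<lambda>S. S), negp = (\<lambda>S. S),
          zero = {z}, one = {u} \<rparr>"

definition FF :: "'a set qmv" where
  "FF = \<lparr> qcarrier = insert {} ((\<lambda>x. {x}) ` (C - Reg)),
          add = (\<lambda>S T. {}),
          neg = (\<lambda>S. n ` S),
          pos = (\<lambda>S. {}), negp = (\<lambda>S. {}),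
          zero = {}, one = {} \<rparr>"

definition "ff x = ({s x z}, g x)"


lemma RegC: "x \<in> Reg \<Longrightarrow> x \<in> C" by (simp add: Reg_def)
lemma Regz: "x \<in> Reg \<Longrightarrow> s x z = x" by (simp add: Reg_def)
lemma zR: "z \<in> Reg" using zz zC by (simp add: Reg_def)
lemma uR: "u \<in> Reg" using ureg uC by (simp add: Reg_def)
lemma sR: "x \<in> C \<Longrightarrow> y \<in> C \<Longrightarrow> s x y \<in> Reg" using sC sreg by (simp add: Reg_def)
lemma sz_R: "x \<in> C \<Longrightarrow> s x z \<in> Reg" using sR zC by simp
lemma nR: "x \<in> Reg \<Longrightarrow> n x \<in> Reg" using nreg nC by (simp add: Reg_def)
lemma nnR: "x \<in> C \<Longrightarrow> x \<notin> Reg \<Longrightarrow> n x \<notin> Reg"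
  using nR nn by metis
lemma joinC: "x \<in> C \<Longrightarrow> y \<in> C \<Longrightarrow> join_with Q (tpos Q) (tneg Q) x y \<in> C"
  by (simp add: join_with_def tC tnC nC sC)

lemma ballS: "(\<forall>X\<in>(\<lambda>x. {x}) ` A. P X) = (\<forall>x\<in>A. P {x})" by auto

lemma BB_simps:
  "qcarrier BB = (\<lambda>x. {x}) ` Reg"
  "add BB {x} {y} = {s x y}" "neg BB {x} = {n x}" "zero BB = {z}" "one BB = {u}"
  by (simp_all add: BB_def)

lemma BB_tpos: "tpos BB {x} = {tpos Q x}" by (simp add: tpos_def BB_simps)
lemma BB_tneg: "tneg BB {x} = {tneg Q x}" by (simp add: tneg_def BB_simps)
lemma BB_join: "join_with BB (tpos BB) (tneg BB) {x} {y} = {join_with Q (tpos Q) (tneg Q) x y}"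
  by (simp add: join_with_def BB_tpos BB_tneg BB_simps)

lemma mvB: "mv_star_algebra BB"
  unfolding mv_star_algebra_def Let_def ballS BB_tpos BB_tneg BB_join BB_simps
  apply (simp add: zR uR sR RegC nR)
  apply (intro conjI ballI)
  apply (simp_all add: RegC Regz comm assoc uu inv ndist nn)
  subgoal for x y using dec[of x y] by (simp add: RegC pos_t neg_t)
  subgoal for x y using pax[of x y] by (simp add: RegC pos_t neg_t nC sC)
  subgoal for x y using J1[of x y] by (simp add: RegC J_t)
  subgoal for x y w using J2[of x y w] by (simp add: RegC J_t joinC)
  subgoal for x y w using J3[of x y w] by (simp add: RegC J_t sC)
  done

lemma flatF: "flat_strong_qmv FF"
  unfolding flat_strong_qmv_def strong_qmv_def quasi_mv_star_algebra_def Let_def join_with_def FF_def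
  using nnR nC nn by (auto simp: image_image)

lemma emb: "embedding Q (prod_alg BB FF) ff"
  unfolding embedding_def
proof (intro conjI ballI)
  show "inj_on ff C"
  proof
    fix x y assume x: "x \<in> C" and y: "y \<in> C" and e: "ff x = ff y"
    then have 1: "s x z = s y z" and 2: "g x = g y" by (auto simp: ff_def)
    show "x = y" using 1 2 by (auto simp: g_def split: if_splits)
  qed
  show "ff ` C \<subseteq> qcarrier (prod_alg BB FF)"
  proof
    fix p assume "p \<in> ff ` C"
    then obtain x where x: "x \<in> C" and p: "p = ff x" by blast
    have "g x \<in> qcarrier FF" using x by (auto simp: g_def FF_def Reg_def)
    then show "p \<in> qcarrier (prod_alg BB FF)"
      using x sz_R by (simp add: p ff_def prod_alg_def BB_simps)
  qed
  show "ff z = zero (prod_alg BB FF)"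
    by (simp add: ff_def prod_alg_def BB_simps FF_def g_def zz)
  show "ff u = one (prod_alg BB FF)"
    by (simp add: ff_def prod_alg_def BB_simps FF_def g_def ureg)
  fix x assume x: "x \<in> C"
  { fix y assume y: "y \<in> C"
    show "ff (s x y) = add (prod_alg BB FF) (ff x) (ff y)"
      using x y by (simp add: ff_def prod_alg_def BB_simps FF_def g_def sreg addreg) }
  have "g (n x) = n ` g x"
    using x nR nnR by (auto simp: g_def Reg_def nC)
  then show "ff (n x) = neg (prod_alg BB FF) (ff x)"
    using x by (simp add: ff_def prod_alg_def BB_simps FF_def nreg)
qed

lemma surj1: "mv_star_algebra Q \<Longrightarrow> ff ` C = qcarrier (prod_alg BB FF)"
proof -
  assume "mv_star_algebra Q"
  then have r: "\<And>x. x \<in> C \<Longrightarrow> s x z = x" unfolding mv_star_algebra_def Let_def by blast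
  then have R: "Reg = C" by (auto simp: Reg_def)
  show ?thesis
    by (auto simp: ff_def g_def prod_alg_def BB_simps FF_def R r)
qed

lemma surj2: "flat_strong_qmv Q \<Longrightarrow> ff ` C = qcarrier (prod_alg BB FF)"
proof -
  assume "flat_strong_qmv Q"
  then have zu: "z = u" by (simp add: flat_strong_qmv_def)
  have r: "s x z = z" if "x \<in> C" for x
  proof -
    have "s (s x z) z = z" using uu[OF that] zu by simp
    then show ?thesis using sreg[OF that zC] by simp
  qed
  then have R: "Reg = {z}" using zR by (auto simp: Reg_def)
  show ?thesis
  proof
    show "ff ` C \<subseteq> qcarrier (prod_alg BB FF)" using emb by (simp add: embedding_def)
    show "qcarrier (prod_alg BB FF) \<subseteq> ff ` C"
    proof
      fix p assume "p \<in> qcarrier (prod_alg BB FF)"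
      then have p: "fst p = {z}" "snd p = {} \<or> (\<exists>x\<in>C. x \<noteq> z \<and> snd p = {x})"
        by (auto simp: prod_alg_def BB_simps FF_def R)
      show "p \<in> ff ` C"
      proof (cases "snd p = {}")
        case True
        then have "p = ff z" using p zz by (cases p) (simp add: ff_def g_def)
        then show ?thesis using zC by blast
      next
        case False
        then obtain x where "x \<in> C" "x \<noteq> z" "snd p = {x}" using p by blast
        then have "p = ff x" using p r by (cases p) (simp add: ff_def g_def)
        then show ?thesis using \<open>x \<in> C\<close> by blast
      qed
    qed
  qed
qed
end

theorem proposition3p1:
  fixes Q :: "'a qmv"
  assumes "strong_qmv Q"
  shows "\<exists>(B :: 'a set qmv) (F :: 'a set qmv) (f :: 'a \<Rightarrow> 'a set \<times> 'a set).
           mv_star_algebra B \<and> flat_strong_qmv F \<and>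
           embedding Q (prod_alg B F) f \<and>
           ((mv_star_algebra Q \<or> flat_strong_qmv Q) \<longrightarrow>
              f ` qcarrier Q = qcarrier (prod_alg B F))"
proof -
  interpret sq Q using assms by (rule sq.intro)
  show ?thesis using mvB flatF emb surj1 surj2 by blast
qed

end
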